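(* Let $t_T=\frac{K_TM_T}{N}$ and $t_R=\frac{K_RM_R}{N}$ be integers with $t_T\ge 1$ and $t_T+t_R\le K_R$, and consider the prefetching and subfile partition described in the context, for an arbitrary demand vector $\mathbf{d}$. Then the set of all small subfiles that need to be delivered, namely $W_{d_j,\mathcal{T},\pi,\pi'}$ (intended for $\text{Rx}_j$) for all $j\in[K_R]$, all $\mathcal{T}\subseteq[K_T]$ with $|\mathcal{T}|=t_T$, all $\mathcal{R}\subseteq[K_R]\setminus\{j\}$ with $|\mathcal{R}|=t_R$, all $\pi\in\Pi_{\mathcal{R}}$ and all $\pi'\in\Pi_{[K_R]\setminus(\mathcal{R}\cup\{j\}),t_T-1}$, can be partitioned into disjoint subsets of size $t_T+t_R$ as $$\bigcup_{\substack{\mathcal{T}\subseteq[K_T]:\ |\mathcal{T}|=t_T\\ \mathcal{R}\subseteq[K_R]:\ |\mathcal{R}|=t_T+t_R\\ \pi\in\Pi^{\mathrm{circ}}_{\mathcal{R}}}}\left\{W_{d_{\pi(l)},\ \mathcal{T}\oplus_{K_T}(l-1),\ \pi[l+1:l+t_R],\ \pi[l+t_R+1:l+t_R+t_T-1]}\ :\ l\in[t_T+t_R]\right\}.$$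
   Context: Setting: $K_T$ transmitters, $K_R$ receivers, a library of $N$ files $W_1,\dots,W_N$ of $F$ packets each ($F$ large enough for all divisions below to be integral), transmitter cache size $M_TF$ packets and receiver cache size $M_RF$ packets. Prefetching: each file $W_n$ is split into $\binom{K_T}{t_T}\binom{K_R}{t_R}$ disjoint equal-size subfiles $W_{n,\mathcal{T},\mathcal{R}}$, one for each $\mathcal{T}\subseteq[K_T]$ with $|\mathcal{T}|=t_T$ and $\mathcal{R}\subseteq[K_R]$ with $|\mathcal{R}|=t_R$. Transmitter $\text{Tx}_i$ caches all $W_{n,\mathcal{T},\mathcal{R}}$ with $i\in\mathcal{T}$; receiver $\text{Rx}_j$ caches all $W_{n,\mathcal{T},\mathcal{R}}$ with $j\in\mathcal{R}$. Receiver $\text{Rx}_j$ requests file $W_{d_j}$ and must receive the subfiles $W_{d_j,\mathcal{T},\mathcal{R}}$ with $j\notin\mathcal{R}$. Notation: for a set $\mathcal{S}$, $\Pi_{\mathcal{S}}$ is the set of permutations (orderings) of $\mathcal{S}$, and for $1\le t\le|\mathcal{S}|$, $\Pi_{\mathcal{S},t}=\bigcup_{\mathcal{A}\subseteq\mathcal{S},|\mathcal{A}|=t}\Pi_{\mathcal{A}}$. $\Pi^{\mathrm{circ}}_{\mathcal{R}}$ is the set of $(|\mathcal{R}|-1)!$ circular permutations of $\mathcal{R}$, each written as a list $\pi=[\pi(1),\dots,\pi(|\mathcal{R}|)]$. For integers $i,j,m$, $i\oplus_m j=1+((i+j-1)\bmod m)$; for a set $\mathcal{T}$, $\mathcal{T}\oplus_m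 j$ is the entrywise application of this operation. For a permutation $\pi$ of a set $\mathcal{S}$ and $j\ge i$, $\pi[i:j]=[\pi(i\oplus_{|\mathcal{S}|}0),\pi(i\oplus_{|\mathcal{S}|}1),\dots,\pi(i\oplus_{|\mathcal{S}|}(j-i))]$. Further partition: for each $j\in[K_R]$, each $\mathcal{T}\subseteq[K_T]$ with $|\mathcal{T}|=t_T$ and each $\mathcal{R}\subseteq[K_R]\setminus\{j\}$ with $|\mathcal{R}|=t_R$, the subfile $W_{d_j,\mathcal{T},\mathcal{R}}$ (to be delivered to $\text{Rx}_j$) is split into $\frac{t_R!\,[K_R-(t_R+1)]!}{[K_R-(t_R+t_T)]!}$ disjoint equal-size smaller subfiles $W_{d_j,\mathcal{T},\pi,\pi'}$, indexed by $\pi\in\Pi_{\mathcal{R}}$ and $\pi'\in\Pi_{[K_R]\setminus(\mathcal{R}\cup\{j\}),t_T-1}$. *)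

theory Defs
  imports Complex_Main
begin

definition oplus :: "nat \<Rightarrow> nat \<Rightarrow> nat \<Rightarrow> nat" where
  "oplus m i j = 1 + ((i + j - 1) mod m)"

definition shift_set :: "nat \<Rightarrow> nat set \<Rightarrow> nat \<Rightarrow> nat set" where
  "shift_set m T j = (\<lambda>t. oplus m t j) ` T"

text \<open>A permutation (ordering) of a set S, written as the list [pi(1),...,pi(|S|)];
  pi(i) is the list entry  p ! (i - 1).\<close>
definition perms :: "'a set \<Rightarrow> 'a list set" where
  "perms S = {p. distinct p \<and> set p = S}"

definition perms_t :: "'a set \<Rightarrow> nat \<Rightarrow> 'a list set" where
  "perms_t S t = {p. distinct p \<and> set p \<subseteq> S \<and> length p = t}"

text \<open>Circular permutations of a (nonempty finite) set of naturals: each rotation class is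
  represented by the unique list in it starting with the minimum of the set.\<close>
definition circ_perms :: "nat set \<Rightarrow> nat list set" where
  "circ_perms R = {p. distinct p \<and> set p = R \<and> p \<noteq> [] \<and> hd p = Min R}"

text \<open>pi[i:j] = [pi(i \<oplus> 0), ..., pi(i \<oplus> (j-i))], with the modulus |S| = length p;
  for j = i - 1 this is the empty list.\<close>
definition slice :: "'a list \<Rightarrow> nat \<Rightarrow> nat \<Rightarrow> 'a list" where
  "slice p i j = map (\<lambda>k. p ! (oplus (length p) i k - 1)) [0..<Suc j - i]"

text \<open>Index of a small subfile to be delivered: (j, T, pi, pi'), standing for
  W_{d_j, T, pi, pi'} intended for receiver Rx_j.\<close>
definition deliverables :: "nat \<Rightarrow> nat \<Rightarrow> nat \<Rightarrow> nat \<Rightarrow> (nat \<times> nat set \<times> nat list \<times> nat list) set" where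
  "deliverables KT KR tT tR =
     {(j, T, p, p') | j T R p p'.
        j \<in> {1..KR} \<and> T \<subseteq> {1..KT} \<and> card T = tT \<and>
        R \<subseteq> {1..KR} - {j} \<and> card R = tR \<and>
        p \<in> perms R \<and> p' \<in> perms_t ({1..KR} - (R \<union> {j})) (tT - 1)}"

definition group_index :: "nat \<Rightarrow> nat \<Rightarrow> nat \<Rightarrow> nat \<Rightarrow> (nat set \<times> nat set \<times> nat list) set" where
  "group_index KT KR tT tR =
     {(T, R, p). T \<subseteq> {1..KT} \<and> card T = tT \<and> R \<subseteq> {1..KR} \<and> card R = tT + tR \<and>
        p \<in> circ_perms R}"

definition block :: "nat \<Rightarrow> nat \<Rightarrow> nat \<Rightarrow> nat set \<times> nat set \<times> nat list
    \<Rightarrow> (nat \<times> nat set \<times> nat list \<times> nat list) set" where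
  "block KT tT tR g = (case g of (T, R, p) \<Rightarrow>
     (\<lambda>l. (p ! (l - 1), shift_set KT T (l - 1), slice p (l + 1) (l + tR),
            slice p (l + tR + 1) (l + tR + tT - 1))) ` {1..tT + tR})"

end

theory Submission
  imports Defs
begin


definition elt :: "nat \<Rightarrow> nat \<Rightarrow> nat set \<Rightarrow> nat list \<Rightarrow> nat \<Rightarrow> nat \<times> nat set \<times> nat list \<times> nat list" where
  "elt KT tR T p a = (hd (rotate a p), shift_set KT T a, take tR (tl (rotate a p)), drop (Suc tR) (rotate a p))"

lemma block_alt:
  assumes "length p = tT + tR" "tT \<ge> 1"
  shows "block KT tT tR (T,R,p) = elt KT tR T p ` {0..<tT+tR}"
proof -
  have e: "{1..tT+tR} = Suc ` {0..<tT+tR}" by (auto simp add: image_Suc_atLeastLessThan)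
  have pt: "(p ! (Suc a - 1), shift_set KT T (Suc a - 1), slice p (Suc a + 1) (Suc a + tR),
            slice p (Suc a + tR + 1) (Suc a + tR + tT - 1)) = elt KT tR T p a"
    if a: "a < tT + tR" for a
  proof -
    have ne: "p \<noteq> []" using assms by auto
    have 1: "p ! a = hd (rotate a p)" using hd_rotate_conv_nth[OF ne, of a] a assms by simp
    have 2: "slice p (Suc a + 1) (Suc a + tR) = take tR (tl (rotate a p))"
    proof (rule nth_equalityI)
      show "length (slice p (Suc a + 1) (Suc a + tR)) = length (take tR (tl (rotate a p)))"
        using assms by (simp add: slice_def)
      fix k assume k: "k < length (slice p (Suc a + 1) (Suc a + tR))"
      then have k': "k < tR" by (simp add: slice_def)
      have "take tR (tl (rotate a p)) ! k = rotate a p ! (Suc k)"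
        using k' assms by (simp add: nth_tl)
      also have "\<dots> = p ! ((a + Suc k) mod (tT+tR))" using nth_rotate[of "Suc k" p a] k' assms by simp
      finally show "slice p (Suc a + 1) (Suc a + tR) ! k = take tR (tl (rotate a p)) ! k"
        using k' assms by (simp add: slice_def oplus_def)
    qed
    have 3: "slice p (Suc a + tR + 1) (Suc a + tR + tT - 1) = drop (Suc tR) (rotate a p)"
    proof (rule nth_equalityI)
      show "length (slice p (Suc a + tR + 1) (Suc a + tR + tT - 1)) = length (drop (Suc tR) (rotate a p))"
        using assms by (simp add: slice_def)
      fix k assume k: "k < length (slice p (Suc a + tR + 1) (Suc a + tR + tT - 1))"
      then have k': "k < tT - 1" using assms by (simp add: slice_def)
      have "drop (Suc tR) (rotate a p) ! k = rotate a p ! (Suc tR + k)"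
        using k' assms by simp
      also have "\<dots> = p ! ((a + (Suc tR + k)) mod (tT+tR))" using nth_rotate[of "Suc tR + k" p a] k' assms by simp
      finally show "slice p (Suc a + tR + 1) (Suc a + tR + tT - 1) ! k = drop (Suc tR) (rotate a p) ! k"
        using k' assms by (simp add: slice_def oplus_def algebra_simps)
    qed
    show ?thesis using 1 2 3 by (simp add: elt_def)
  qed
  show ?thesis unfolding block_def e image_image split_conv by (rule image_cong[OF refl]) (use pt in auto)
qed



lemma oplus_range: "K > 0 \<Longrightarrow> oplus K t a \<in> {1..K}"
  by (simp add: oplus_def Suc_leI)

lemma oplus_comp: "t \<ge> 1 \<Longrightarrow> K > 0 \<Longrightarrow> oplus K (oplus K t c) a = oplus K t (c + a)"
  by (simp add: oplus_def mod_add_left_eq add.assoc)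

lemma oplus_zero: "t \<in> {1..K} \<Longrightarrow> c mod K = 0 \<Longrightarrow> oplus K t c = t"
proof -
  assume t: "t \<in> {1..K}" and c: "c mod K = 0"
  have "(t + c - 1) mod K = ((t - 1) + c) mod K" using t by simp
  also have "\<dots> = (t - 1) mod K" using c by (simp add: mod_add_right_eq[symmetric])
  also have "\<dots> = t - 1" using t by (intro mod_less) auto
  finally show ?thesis using t by (simp add: oplus_def)
qed

lemma oplus_inj: "inj_on (\<lambda>t. oplus K t a) {1..K}"
proof (rule inj_onI)
  fix x y assume x: "x \<in> {1..K}" and y: "y \<in> {1..K}" and e: "oplus K x a = oplus K y a"
  have "oplus K (oplus K x a) (K - a mod K) = oplus K (oplus K y a) (K - a mod K)" using e by simp
  moreover have K: "K > 0" using x by simp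
  moreover have "(a + (K - a mod K)) mod K = 0"
  proof -
    have "(a + (K - a mod K)) mod K = (a mod K + (K - a mod K)) mod K" by (simp add: mod_add_left_eq)
    also have "\<dots> = K mod K" using K by (simp add: less_imp_le)
    finally show ?thesis by simp
  qed
  ultimately show "x = y" using x y by (simp add: oplus_comp oplus_zero)
qed

lemma shift_sub: "K > 0 \<Longrightarrow> shift_set K T a \<subseteq> {1..K}"
  using oplus_range unfolding shift_set_def by blast

lemma shift_card: "T \<subseteq> {1..K} \<Longrightarrow> card (shift_set K T a) = card T"
  unfolding shift_set_def by (rule card_image) (use oplus_inj inj_on_subset in blast)

lemma shift_inj: "T \<subseteq> {1..K} \<Longrightarrow> T' \<subseteq> {1..K} \<Longrightarrow> shift_set K T a = shift_set K T' a \<Longrightarrow> T = T'"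
  unfolding shift_set_def using inj_on_image_eq_iff[OF oplus_inj] by blast

lemma shift_inv: assumes "T \<subseteq> {1..K}" "K > 0"
  shows "shift_set K (shift_set K T (K - a mod K)) a = T"
proof -
  have m: "(K - a mod K + a) mod K = 0"
  proof -
    have "(K - a mod K + a) mod K = (K - a mod K + a mod K) mod K" by (simp add: mod_add_right_eq)
    also have "\<dots> = K mod K" using assms by (simp add: less_imp_le)
    finally show ?thesis by simp
  qed
  have "oplus K (oplus K t (K - a mod K)) a = t" if t: "t \<in> T" for t
  proof -
    have t1: "t \<in> {1..K}" using t assms by auto
    have "oplus K (oplus K t (K - a mod K)) a = oplus K t (K - a mod K + a)"
      using t1 assms by (intro oplus_comp) auto
    also have "\<dots> = t" using oplus_zero[OF t1 m] .
    finally show ?thesis .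
  qed
  then show ?thesis unfolding shift_set_def image_image by simp
qed

lemma rot_unique:
  assumes d: "distinct p" "distinct p'" and h: "hd p = Min (set p)" "hd p' = Min (set p')"
    and ne: "p \<noteq> []" and l: "length p' = length p" and ab: "a < length p" "b < length p"
    and r: "rotate a p = rotate b p'"
  shows "a = b \<and> p = p'"
proof -
  let ?n = "length p"
  have ne': "p' \<noteq> []" using l ne by auto
  have "set p = set p'" by (metis r set_rotate)
  then have h0: "p ! 0 = p' ! 0" using h ne ne' by (simp add: hd_conv_nth)
  define i where "i = (?n - a) mod ?n"
  have i: "i < ?n" using ne by (simp add: i_def)
  have ai: "(a + i) mod ?n = 0"
  proof -
    have "(a + i) mod ?n = (a + (?n - a)) mod ?n" by (simp add: i_def mod_add_right_eq)
    also have "\<dots> = 0" using ab by simp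
    finally show ?thesis .
  qed
  have "p ! 0 = rotate a p ! i" using nth_rotate[OF i, of a] ai by simp
  also have "\<dots> = rotate b p' ! i" using r by simp
  also have "\<dots> = p' ! ((b + i) mod ?n)" using nth_rotate[of i p' b] i l by simp
  finally have "p' ! 0 = p' ! ((b + i) mod ?n)" using h0 by simp
  then have bi: "(b + i) mod ?n = 0" using d(2) l ne by (simp add: nth_eq_iff_index_eq)
  have "a = b"
  proof -
    have "(a + i) mod ?n = (b + i) mod ?n" using ai bi by simp
    then show ?thesis using ab i by (auto simp: mod_if split: if_splits)
  qed
  moreover have "p = p'"
  proof (rule nth_equalityI)
    show "length p = length p'" using l by simp
    fix k assume k: "k < length p"
    have "rotate ((?n - a) mod ?n) (rotate a p) = p" using ai by (simp add: rotate_rotate i_def add.commute)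
    moreover have "rotate ((?n - a) mod ?n) (rotate b p') = p'" using bi \<open>a = b\<close> l by (simp add: rotate_rotate i_def add.commute)
    ultimately show "p ! k = p' ! k" using r by metis
  qed
  ultimately show ?thesis by simp
qed

lemma list_split: "q \<noteq> [] \<Longrightarrow> q = hd q # take k (tl q) @ drop (Suc k) q"
  by (cases q) auto



theorem lemma1:
  fixes KT KR N tT tR :: nat and MT MR :: real
  assumes "N > 0"
    and "real tT = real KT * MT / real N"
    and "real tR = real KR * MR / real N"
    and "tT \<ge> 1" and "tT + tR \<le> KR"
  shows "(\<forall>g \<in> group_index KT KR tT tR. card (block KT tT tR g) = tT + tR)
       \<and> (\<forall>g \<in> group_index KT KR tT tR. \<forall>h \<in> group_index KT KR tT tR.
            g \<noteq> h \<longrightarrow> block KT tT tR g \<inter> block KT tT tR h = {})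
       \<and> (\<Union>g \<in> group_index KT KR tT tR. block KT tT tR g) = deliverables KT KR tT tR"
proof -
  note tT = \<open>tT \<ge> 1\<close>
  define n where "n = tT + tR"
  have n0: "n > 0" using tT by (simp add: n_def)
  have GI: "length p = n \<and> distinct p \<and> set p = R \<and> p \<noteq> [] \<and> hd p = Min R \<and> T \<subseteq> {1..KT} \<and> card T = tT
      \<and> R \<subseteq> {1..KR} \<and> KT > 0"
    if g: "(T, R, p) \<in> group_index KT KR tT tR" for T R p
  proof -
    have d: "distinct p" "set p = R" "p \<noteq> []" "hd p = Min R" "T \<subseteq> {1..KT}" "card T = tT" "card R = n" "R \<subseteq> {1..KR}"
      using g by (auto simp: group_index_def circ_perms_def n_def)
    have "length p = n" using d distinct_card by metis
    moreover have "KT > 0"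
    proof (rule ccontr)
      assume "\<not> KT > 0" then have "T = {}" using d by auto
      then show False using d tT by simp
    qed
    ultimately show ?thesis using d by simp
  qed
  have BA: "block KT tT tR (T, R, p) = elt KT tR T p ` {0..<n}"
    if g: "(T, R, p) \<in> group_index KT KR tT tR" for T R p
    using block_alt[of p tT tR KT T R] GI[OF g] tT by (simp add: n_def)
  have rot_ne: "rotate a p \<noteq> []" if "p \<noteq> []" for a and p :: "nat list" using that by simp
  have P1: "card (block KT tT tR g) = n" if g: "g \<in> group_index KT KR tT tR" for g
  proof -
    obtain T R p where gg: "g = (T, R, p)" by (cases g) auto
    note G = GI[OF g[unfolded gg]]
    have "inj_on (elt KT tR T p) {0..<n}"
    proof (rule inj_onI)
      fix a b assume a: "a \<in> {0..<n}" and b: "b \<in> {0..<n}" and e: "elt KT tR T p a = elt KT tR T p b"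
      have "p ! a = p ! b" using e a b G hd_rotate_conv_nth[of p] by (simp add: elt_def)
      then show "a = b" using a b G by (simp add: nth_eq_iff_index_eq)
    qed
    then show ?thesis using BA[OF g[unfolded gg]] gg by (simp add: card_image)
  qed
  have P2: "block KT tT tR g \<inter> block KT tT tR h = {}"
    if g: "g \<in> group_index KT KR tT tR" and h: "h \<in> group_index KT KR tT tR" and gh: "g \<noteq> h" for g h
  proof (rule ccontr)
    assume "block KT tT tR g \<inter> block KT tT tR h \<noteq> {}"
    then obtain x where x: "x \<in> block KT tT tR g" "x \<in> block KT tT tR h" by blast
    obtain T R p where gg: "g = (T, R, p)" by (cases g) auto
    obtain T2 R2 p2 where hh: "h = (T2, R2, p2)" by (cases h) auto
    note G = GI[OF g[unfolded gg]] and H = GI[OF h[unfolded hh]]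
    obtain a where a: "a < n" "x = elt KT tR T p a" using x(1) BA[OF g[unfolded gg]] gg by auto
    obtain b where b: "b < n" "x = elt KT tR T2 p2 b" using x(2) BA[OF h[unfolded hh]] hh by auto
    have e: "elt KT tR T p a = elt KT tR T2 p2 b" using a b by simp
    have "rotate a p = rotate b p2"
      using list_split[OF rot_ne[of p a], of tR] list_split[OF rot_ne[of p2 b], of tR] e G H
      by (simp add: elt_def)
    then have ab: "a = b \<and> p = p2" using rot_unique[of p p2 a b] G H a b by simp
    then have "R = R2" using G H by auto
    moreover have "T = T2" using e ab G H shift_inj[of T KT T2 a] by (simp add: elt_def)
    ultimately show False using gh gg hh ab by simp
  qed
  have P3a: "x \<in> deliverables KT KR tT tR" if g: "g \<in> group_index KT KR tT tR" and x: "x \<in> block KT tT tR g" for g x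
  proof -
    obtain T R p where gg: "g = (T, R, p)" by (cases g) auto
    note G = GI[OF g[unfolded gg]]
    obtain a where a: "a < n" "x = elt KT tR T p a" using x BA[OF g[unfolded gg]] gg by auto
    define q where "q = rotate a p"
    have q: "distinct q" "set q = R" "length q = n" "q \<noteq> []" using G by (auto simp: q_def)
    define j where "j = hd q"
    define pi where "pi = take tR (tl q)"
    define pi' where "pi' = drop (Suc tR) q"
    have qs: "q = j # pi @ pi'" using list_split[OF q(4), of tR] by (simp add: j_def pi_def pi'_def)
    have dd: "distinct (j # pi @ pi')" using q(1) qs by simp
    have lpi: "length pi = tR" using q(3) tT by (simp add: pi_def n_def)
    have lpi': "length pi' = tT - 1" using q(3) by (simp add: pi'_def n_def)
    have sR: "set (j # pi @ pi') \<subseteq> {1..KR}" using qs q(2) G by simp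
    have "x = (j, shift_set KT T a, pi, pi')" using a by (simp add: elt_def j_def pi_def pi'_def q_def)
    moreover have "j \<in> {1..KR}" using sR by simp
    moreover have "shift_set KT T a \<subseteq> {1..KT}" using shift_sub G by blast
    moreover have "card (shift_set KT T a) = tT" using shift_card G by metis
    moreover have "set pi \<subseteq> {1..KR} - {j}" using sR dd by auto
    moreover have "card (set pi) = tR" using dd lpi distinct_card by (metis distinct.simps(2) distinct_append)
    moreover have "pi \<in> perms (set pi)" using dd by (simp add: perms_def)
    moreover have "pi' \<in> perms_t ({1..KR} - (set pi \<union> {j})) (tT - 1)" using dd sR lpi' by (auto simp: perms_t_def)
    ultimately show ?thesis unfolding deliverables_def by blast
  qed
  have P3b: "x \<in> (\<Union>g \<in> group_index KT KR tT tR. block KT tT tR g)" if x: "x \<in> deliverables KT KR tT tR" for x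
  proof -
    obtain j T' R0 pi pi' where xx: "x = (j, T', pi, pi')" and j: "j \<in> {1..KR}" and T': "T' \<subseteq> {1..KT}" "card T' = tT"
      and R0: "R0 \<subseteq> {1..KR} - {j}" "card R0 = tR" and pi: "pi \<in> perms R0"
      and pi': "pi' \<in> perms_t ({1..KR} - (R0 \<union> {j})) (tT - 1)"
      using x unfolding deliverables_def by blast
    have KT0: "KT > 0"
    proof (rule ccontr)
      assume "\<not> KT > 0" then have "T' = {}" using T' by auto
      then show False using T' tT by simp
    qed
    define q where "q = j # pi @ pi'"
    have pid: "distinct pi" "set pi = R0" using pi by (auto simp: perms_def)
    have lpi: "length pi = tR" using distinct_card[OF pid(1)] pid(2) R0(2) by simp
    have pi'd: "distinct pi'" "set pi' \<subseteq> {1..KR} - (R0 \<union> {j})" "length pi' = tT - 1" using pi' by (auto simp: perms_t_def)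
    have qd: "distinct q" using pid pi'd R0 by (auto simp: q_def)
    have ql: "length q = n" using lpi pi'd tT by (simp add: q_def n_def)
    define S where "S = set q"
    have cS: "card S = n" unfolding S_def using distinct_card[OF qd] ql by simp
    have S1: "S \<subseteq> {1..KR}" unfolding S_def q_def using j pid(2) pi'd(2) R0(1) by auto
    have S: "S \<subseteq> {1..KR}" "card S = n" "finite S" "S \<noteq> {}"
      using S1 cS by (simp_all add: S_def q_def)
    have "Min S \<in> set q" using Min_in[OF S(3) S(4)] by (simp add: S_def)
    then obtain i where i: "i < length q" "q ! i = Min S" unfolding in_set_conv_nth by blast
    define p where "p = rotate i q"
    have p: "distinct p" "set p = S" "p \<noteq> []" "hd p = Min S" "length p = n"
    proof -
      have qne: "q \<noteq> []" by (simp add: q_def)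
      show "distinct p" using qd by (simp add: p_def)
      show "set p = S" by (simp add: p_def S_def)
      show "p \<noteq> []" using qne by (simp add: p_def)
      show "hd p = Min S" unfolding p_def using hd_rotate_conv_nth[OF qne, of i] i by simp
      show "length p = n" using ql by (simp add: p_def)
    qed
    define a where "a = (n - i) mod n"
    have a: "a < n" using n0 by (simp add: a_def)
    have "(a + i) mod n = 0"
    proof -
      have "(a + i) mod n = ((n - i) + i) mod n" by (simp add: a_def mod_add_left_eq)
      also have "\<dots> = 0" using i ql by simp
      finally show ?thesis .
    qed
    then have rq: "rotate a p = q" using ql by (simp add: p_def rotate_rotate)
    define T where "T = shift_set KT T' (KT - a mod KT)"
    have Tsub: "T \<subseteq> {1..KT}" using shift_sub[OF KT0] by (simp add: T_def)
    have Tc: "card T = tT" using shift_card[OF T'(1)] T' by (simp add: T_def)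
    have g: "(T, S, p) \<in> group_index KT KR tT tR"
      using Tsub Tc S p by (simp add: group_index_def circ_perms_def n_def)
    have "elt KT tR T p a = x"
      using rq shift_inv[OF T'(1) KT0, of a] lpi by (simp add: elt_def xx q_def T_def)
    then have "x \<in> block KT tT tR (T, S, p)" using BA[OF g] a by auto
    then show ?thesis using g by blast
  qed
  have U: "(\<Union>g \<in> group_index KT KR tT tR. block KT tT tR g) = deliverables KT KR tT tR"
  proof
    show "(\<Union>g \<in> group_index KT KR tT tR. block KT tT tR g) \<subseteq> deliverables KT KR tT tR"
      using P3a by blast
    show "deliverables KT KR tT tR \<subseteq> (\<Union>g \<in> group_index KT KR tT tR. block KT tT tR g)"
      using P3b by (rule subsetI)
  qed
  show ?thesis using P1 P2 U unfolding n_def by blast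
qed

end
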